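(* If $\psi \in \mathcal{D}^1$, then for each $i=1,\dots,I$ and every $u\in\mathbb{R}_+$, \[i\, \psi_i'(u)=\sum_{j=1}^{I}M_{ij}^*(\psi'(u))\,v^{\mathrm{eff}}_j(\psi'(u))\, \psi_j'(u),\] where $\psi'(u)=(\psi_1'(u),\dots,\psi_I'(u))$.
   Context: Fix $I\in\mathbb{N}$. $\mathcal{C}=\{f\in C(\mathbb{R}_+,\mathbb{R}_+):f(0)=0,f\text{ non-decreasing}\}$, $\mathcal{C}^\uparrow=\{f\in\mathcal{C}:f\text{ strictly increasing},\lim_{u\to\infty}f(u)=\infty\}$, $\mathcal{C}^1=\{f\in\mathcal{C}:f^{\mathbb{R}}\in C^1(\mathbb{R},\mathbb{R})\}$ where $f^{\mathbb{R}}$ extends $f$ by $0$ on $(-\infty,0)$. For $\psi\in\mathcal{C}^I$, $\phi_i(u)=u-\sum_j2(i\wedge j)\psi_j(u)$; $\mathcal{D}=\{\psi\in\mathcal{C}^I:\phi_I\in\mathcal{C}^\uparrow,\sum_ii\sup_{u_1\ne u_2}\frac{\psi_i(u_1)-\psi_i(u_2)}{\phi_i(u_1)-\phi_i(u_2)}<\frac12\}$ and $\mathcal{D}^1=\mathcal{D}\cap(\mathcal{C}^1)^I$. With $\kappa_{ij}=2(i\wedge j)$, for $\rho\in\mathbb{R}_+^I$ let $M(\rho)$ have $M_{ii}=1-\sum_{j\neq i}\kappa_{ij}\rho_j$, $M_{ij}=\kappa_{ij}\rho_j$ ($i\neq j$), and $M^*(\rho)$ have $M^*_{ii}=1-\sum_{j\ne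 i}\kappa_{ij}\rho_j$, $M^*_{ij}=\kappa_{ij}\rho_i$ ($i\neq j$). When $\sum_i2i\rho_i<1$, $M(\rho)$ is invertible and $v^{\mathrm{eff}}(\rho):=M(\rho)^{-1}(1,2,\dots,I)^T$ (for $\psi\in\mathcal{D}^1$ this condition holds for $\rho=\psi'(u)$). *)

theory Defs
  imports "HOL-Analysis.Analysis"
begin

text \<open>Functions on R_+ are represented as real \<Rightarrow> real; only values on {0..} matter.
  Vectors/matrices indexed by {1..I} are nat \<Rightarrow> real / nat \<Rightarrow> nat \<Rightarrow> real.\<close>

definition classC :: "(real \<Rightarrow> real) \<Rightarrow> bool" where
  "classC f \<longleftrightarrow> continuous_on {0..} f \<and> f 0 = 0 \<and> (\<forall>u\<ge>0. f u \<ge> 0) \<and> mono_on {0..} f"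

definition classCup :: "(real \<Rightarrow> real) \<Rightarrow> bool" where
  "classCup f \<longleftrightarrow> classC f \<and> strict_mono_on {0..} f \<and> filterlim f at_top at_top"

definition extR :: "(real \<Rightarrow> real) \<Rightarrow> real \<Rightarrow> real" where
  "extR f x = (if x < 0 then 0 else f x)"

definition classC1 :: "(real \<Rightarrow> real) \<Rightarrow> bool" where
  "classC1 f \<longleftrightarrow> classC f \<and>
     (\<exists>g. continuous_on UNIV g \<and> (\<forall>x. (extR f has_real_derivative g x) (at x)))"

text \<open>psi'(u): derivative of the extension f^R at u (one-sided at u = 0).\<close>
definition dpsi :: "(nat \<Rightarrow> real \<Rightarrow> real) \<Rightarrow> nat \<Rightarrow> real \<Rightarrow> real" where
  "dpsi psi j u = deriv (extR (psi j)) u"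

definition kappa :: "nat \<Rightarrow> nat \<Rightarrow> real" where
  "kappa i j = 2 * real (min i j)"

definition phi :: "nat \<Rightarrow> (nat \<Rightarrow> real \<Rightarrow> real) \<Rightarrow> nat \<Rightarrow> real \<Rightarrow> real" where
  "phi I psi i u = u - (\<Sum>j\<in>{1..I}. kappa i j * psi j u)"

definition classD :: "nat \<Rightarrow> (nat \<Rightarrow> real \<Rightarrow> real) set" where
  "classD I = {psi. (\<forall>i\<in>{1..I}. classC (psi i)) \<and> classCup (phi I psi I) \<and>
      (\<Sum>i\<in>{1..I}. ereal (real i) *
         (SUP p\<in>{(a,b). a \<ge> (0::real) \<and> b \<ge> 0 \<and> a \<noteq> b}.
            ereal ((psi i (fst p) - psi i (snd p)) / (phi I psi i (fst p) - phi I psi i (snd p)))))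
        < ereal (1/2)}"

definition classD1 :: "nat \<Rightarrow> (nat \<Rightarrow> real \<Rightarrow> real) set" where
  "classD1 I = {psi \<in> classD I. \<forall>i\<in>{1..I}. classC1 (psi i)}"

definition Mmat :: "nat \<Rightarrow> (nat \<Rightarrow> real) \<Rightarrow> nat \<Rightarrow> nat \<Rightarrow> real" where
  "Mmat I rho i j = (if i = j then 1 - (\<Sum>k\<in>{1..I}-{i}. kappa i k * rho k)
                     else kappa i j * rho j)"

definition Mstar :: "nat \<Rightarrow> (nat \<Rightarrow> real) \<Rightarrow> nat \<Rightarrow> nat \<Rightarrow> real" where
  "Mstar I rho i j = (if i = j then 1 - (\<Sum>k\<in>{1..I}-{i}. kappa i k * rho k)
                      else kappa i j * rho i)"

text \<open>v_eff(rho) = M(rho)^{-1} (1,...,I)^T: the unique solution v (supported on {1..I})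
  of M(rho) v = (1,...,I)^T.\<close>
definition veff :: "nat \<Rightarrow> (nat \<Rightarrow> real) \<Rightarrow> nat \<Rightarrow> real" where
  "veff I rho = (THE v. (\<forall>i\<in>{1..I}. (\<Sum>j\<in>{1..I}. Mmat I rho i j * v j) = real i)
                       \<and> (\<forall>j. j \<notin> {1..I} \<longrightarrow> v j = 0))"

end

theory Submission
  imports Defs "Jordan_Normal_Form.Determinant"
begin


lemma sum_shift1: "(\<Sum>j\<in>{1..n::nat}. f j) = (\<Sum>j<n. f (Suc j))"
  by (induction n) auto

lemma inj_imp_solvable:
  fixes A :: "nat \<Rightarrow> nat \<Rightarrow> real" and n :: nat and b :: "nat \<Rightarrow> real"
  assumes inj: "\<And>v. (\<forall>i\<in>{1..n}. (\<Sum>j\<in>{1..n}. A i j * v j) = 0) \<Longrightarrow> (\<forall>j\<in>{1..n}. v j = 0)"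
  shows "\<exists>v. \<forall>i\<in>{1..n}. (\<Sum>j\<in>{1..n}. A i j * v j) = b i"
proof -
  define M where "M = mat n n (\<lambda>(i,j). A (Suc i) (Suc j))"
  have Mc: "M \<in> carrier_mat n n" unfolding M_def by simp
  have mv: "(M *\<^sub>v x) $ i = (\<Sum>j\<in>{1..n}. A (Suc i) j * x $ (j - 1))" if "i < n" "x \<in> carrier_vec n" for i x
    using that unfolding M_def sum_shift1
    by (simp add: scalar_prod_def atLeast0LessThan)
  have "det M \<noteq> 0"
  proof
    assume "det M = 0"
    then obtain x where x: "x \<in> carrier_vec n" "x \<noteq> 0\<^sub>v n" "M *\<^sub>v x = 0\<^sub>v n"
      using det_0_iff_vec_prod_zero_field[OF Mc] by auto
    define v where "v j = x $ (j - 1)" for j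
    have "\<forall>i\<in>{1..n}. (\<Sum>j\<in>{1..n}. A i j * v j) = 0"
    proof
      fix i assume i: "i \<in> {1..n}"
      have il: "i - 1 < n" using i by auto
      from x(3) have "(M *\<^sub>v x) $ (i - 1) = 0" using il by simp
      with il show "(\<Sum>j\<in>{1..n}. A i j * v j) = 0" using mv[of "i - 1" x] i x unfolding v_def by simp
    qed
    then have "\<forall>j\<in>{1..n}. v j = 0" by (rule inj)
    then have "x = 0\<^sub>v n" using x(1) unfolding v_def
      by (intro eq_vecI) (auto elim!: ballE[where x="Suc _"])
    with x show False by simp
  qed
  from det_non_zero_imp_unit[OF Mc this, unfolded Units_def, of "()"]
  obtain B where B: "B \<in> carrier_mat n n" and AB: "M * B = 1\<^sub>m n"
    by (auto simp: ring_mat_def)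
  define bv where "bv = vec n (\<lambda>i. b (Suc i))"
  define x where "x = B *\<^sub>v bv"
  have xc: "x \<in> carrier_vec n" unfolding x_def bv_def using B by simp
  have "M *\<^sub>v x = (M * B) *\<^sub>v bv" unfolding x_def bv_def using B Mc
    by (simp add: assoc_mult_mat_vec)
  also have "\<dots> = bv" unfolding AB bv_def by simp
  finally have Mx: "M *\<^sub>v x = bv" .
  show ?thesis
  proof (intro exI ballI)
    fix i assume i: "i \<in> {1..n}"
    have il: "i - 1 < n" "Suc (i - 1) = i" using i by auto
    have "(M *\<^sub>v x) $ (i - 1) = b i" using Mx il unfolding bv_def by simp
    then show "(\<Sum>j\<in>{1..n}. A i j * x $ (j - 1)) = b i" using mv[of "i - 1" x] il xc by simp
  qed
qed


lemma rquot_lim: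
  assumes f: "classC1 f" and u: "u \<ge> 0"
  shows "((\<lambda>a. (f a - f u) / (a - u)) \<longlongrightarrow> deriv (extR f) u) (at_right u)"
proof -
  obtain g where g: "\<And>x. (extR f has_real_derivative g x) (at x)"
    using f unfolding classC1_def by blast
  have D: "deriv (extR f) u = g u" using g by (rule DERIV_imp_deriv)
  have "((\<lambda>a. (extR f a - extR f u) / (a - u)) \<longlongrightarrow> g u) (at u)"
    using g[of u] unfolding has_field_derivative_iff .
  then have L: "((\<lambda>a. (extR f a - extR f u) / (a - u)) \<longlongrightarrow> g u) (at_right u)"
    by (rule tendsto_mono[OF at_le, rotated]) simp
  have "\<forall>\<^sub>F a in at_right u. (extR f a - extR f u) / (a - u) = (f a - f u) / (a - u)"
    using eventually_at_right_less[of u] by eventually_elim (use u in \<open>auto simp: extR_def\<close>)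
  with L show ?thesis unfolding D by (simp add: tendsto_cong)
qed

lemma kappa_le: "kappa i j \<le> 2 * real i" unfolding kappa_def by simp

lemma kappa_mono: "k \<le> I \<Longrightarrow> j \<le> I \<Longrightarrow> kappa k j \<le> kappa I j" unfolding kappa_def by simp

lemma phi_diff:
  "phi I psi k a - phi I psi k b = (a - b) - (\<Sum>j\<in>{1..I}. kappa k j * (psi j a - psi j b))"
  unfolding phi_def by (simp add: sum_subtractf right_diff_distrib)

lemma phi_diff2:
  "phi I psi k a - phi I psi k b = (phi I psi I a - phi I psi I b) +
     (\<Sum>j\<in>{1..I}. (kappa I j - kappa k j) * (psi j a - psi j b))"
  unfolding phi_diff by (simp add: sum_subtractf left_diff_distrib)

lemma Mmat_row:
  assumes i: "i \<in> {1..I}"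
  shows "(\<Sum>j\<in>{1..I}. Mmat I rho i j * v j) =
    (1 - (\<Sum>j\<in>{1..I}. kappa i j * rho j)) * v i + (\<Sum>j\<in>{1..I}. kappa i j * rho j * v j)"
proof -
  have f: "finite {1..I}" by simp
  have "(\<Sum>j\<in>{1..I}. Mmat I rho i j * v j) = Mmat I rho i i * v i + (\<Sum>j\<in>{1..I}-{i}. Mmat I rho i j * v j)"
    using sum.remove[OF f i] by blast
  also have "(\<Sum>j\<in>{1..I}-{i}. Mmat I rho i j * v j) = (\<Sum>j\<in>{1..I}-{i}. kappa i j * rho j * v j)"
    by (rule sum.cong) (auto simp: Mmat_def)
  finally have 1: "(\<Sum>j\<in>{1..I}. Mmat I rho i j * v j) = (1 - (\<Sum>k\<in>{1..I}-{i}. kappa i k * rho k)) * v i + (\<Sum>j\<in>{1..I}-{i}. kappa i j * rho j * v j)"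
    by (simp add: Mmat_def)
  have 2: "(\<Sum>j\<in>{1..I}. kappa i j * rho j) = kappa i i * rho i + (\<Sum>j\<in>{1..I}-{i}. kappa i j * rho j)"
    using sum.remove[OF f i] by blast
  have 3: "(\<Sum>j\<in>{1..I}. kappa i j * rho j * v j) = kappa i i * rho i * v i + (\<Sum>j\<in>{1..I}-{i}. kappa i j * rho j * v j)"
    using sum.remove[OF f i] by blast
  show ?thesis unfolding 1 2 3 by (simp add: algebra_simps)
qed

lemma Mstar_Mmat: "Mstar I rho i j * rho j = rho i * Mmat I rho i j"
  unfolding Mstar_def Mmat_def by auto

lemma main_part:
  fixes I :: nat and psi :: "nat \<Rightarrow> real \<Rightarrow> real" and u :: real
  assumes "psi \<in> classD1 I" and u: "u \<ge> 0"
  defines "rho \<equiv> (\<lambda>k. dpsi psi k u)"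
  shows "\<And>v. (\<forall>i\<in>{1..I}. (\<Sum>j\<in>{1..I}. Mmat I rho i j * v j) = 0) \<Longrightarrow> (\<forall>j\<in>{1..I}. v j = 0)"
proof -
  let ?A = "{1..I}"
  have hC: "\<And>k. k \<in> ?A \<Longrightarrow> classC (psi k)" and hC1: "\<And>k. k \<in> ?A \<Longrightarrow> classC1 (psi k)"
    and hup: "classCup (phi I psi I)"
    and hsum: "(\<Sum>i\<in>{1..I}. ereal (real i) *
         (SUP p\<in>{(a,b). a \<ge> (0::real) \<and> b \<ge> 0 \<and> a \<noteq> b}.
            ereal ((psi i (fst p) - psi i (snd p)) / (phi I psi i (fst p) - phi I psi i (snd p)))))
        < ereal (1/2)"
    using assms(1) unfolding classD1_def classD_def by auto
  define P where "P = {(a,b). a \<ge> (0::real) \<and> b \<ge> 0 \<and> a \<noteq> b}"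
  define E where "E k = (SUP p\<in>P. ereal ((psi k (fst p) - psi k (snd p)) / (phi I psi k (fst p) - phi I psi k (snd p))))" for k
  have hsum': "(\<Sum>k\<in>?A. ereal (real k) * E k) < ereal (1/2)" using hsum unfolding E_def P_def .
  define c where "c k = 1 - (\<Sum>j\<in>?A. kappa k j * rho j)" for k
  define Q where "Q k a = (psi k a - psi k u) / (phi I psi k a - phi I psi k u)" for k a
  have lim_psi: "((\<lambda>a. (psi k a - psi k u) / (a - u)) \<longlongrightarrow> rho k) (at_right u)" if "k \<in> ?A" for k
    using rquot_lim[OF hC1[OF that] u] unfolding rho_def dpsi_def .
  have mono_psi: "psi k b \<le> psi k a" if "k \<in> ?A" "0 \<le> b" "b \<le> a" for k a b
    using hC[OF that(1)] that(2,3) unfolding classC_def mono_on_def by auto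
  have rho_nn: "0 \<le> rho k" if "k \<in> ?A" for k
  proof (rule tendsto_lowerbound[OF lim_psi[OF that]])
    show "\<forall>\<^sub>F a in at_right u. 0 \<le> (psi k a - psi k u) / (a - u)"
      using eventually_at_right_less[of u] by eventually_elim (use mono_psi[OF that] u in \<open>auto\<close>)
  qed simp
  have lim_phi: "((\<lambda>a. (phi I psi k a - phi I psi k u) / (a - u)) \<longlongrightarrow> c k) (at_right u)" if "k \<in> ?A" for k
  proof -
    have "((\<lambda>a. 1 - (\<Sum>j\<in>?A. kappa k j * ((psi j a - psi j u) / (a - u)))) \<longlongrightarrow> c k) (at_right u)"
      unfolding c_def by (intro tendsto_intros lim_psi) auto
    moreover have "\<forall>\<^sub>F a in at_right u. 1 - (\<Sum>j\<in>?A. kappa k j * ((psi j a - psi j u) / (a - u)))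
        = (phi I psi k a - phi I psi k u) / (a - u)"
      using eventually_at_right_less[of u]
    proof eventually_elim
      case (elim a)
      then have "a - u \<noteq> 0" by simp
      have "(\<Sum>j\<in>?A. kappa k j * ((psi j a - psi j u) / (a - u))) = (\<Sum>j\<in>?A. kappa k j * (psi j a - psi j u)) / (a - u)"
        by (simp add: sum_divide_distrib)
      then show ?case unfolding phi_diff using \<open>a - u \<noteq> 0\<close>
        by (simp add: diff_divide_distrib)
    qed
    ultimately show ?thesis by (simp add: tendsto_cong)
  qed
  have phi_strict: "phi I psi k b < phi I psi k a" if "k \<in> ?A" "0 \<le> b" "b < a" for k a b
  proof -
    have "phi I psi I b < phi I psi I a" using hup that(2,3) unfolding classCup_def strict_mono_on_def by auto
    moreover have "0 \<le> (\<Sum>j\<in>?A. (kappa I j - kappa k j) * (psi j a - psi j b))"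
      using that by (intro sum_nonneg mult_nonneg_nonneg) (auto intro: mono_psi simp: kappa_mono)
    ultimately show ?thesis using phi_diff2[of I psi k a b] by linarith
  qed
  have c_nn: "0 \<le> c k" if "k \<in> ?A" for k
  proof (rule tendsto_lowerbound[OF lim_phi[OF that]])
    show "\<forall>\<^sub>F a in at_right u. 0 \<le> (phi I psi k a - phi I psi k u) / (a - u)"
      using eventually_at_right_less[of u]
    proof eventually_elim
      case (elim a)
      have "phi I psi k u < phi I psi k a" using phi_strict[OF that u elim] .
      with elim show ?case by (intro divide_nonneg_pos) auto
    qed
  qed simp
  have E_upper: "ereal (Q k a) \<le> E k" if "u < a" for k a
    unfolding E_def Q_def by (rule SUP_upper2[of "(a,u)"]) (use that u in \<open>auto simp: P_def\<close>)
  have E_pos: "ereal (rho k / c k) \<le> E k" if "k \<in> ?A" "c k > 0" for k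
  proof -
    have "((\<lambda>a. ((psi k a - psi k u) / (a - u)) / ((phi I psi k a - phi I psi k u) / (a - u))) \<longlongrightarrow> rho k / c k) (at_right u)"
      using that by (intro tendsto_divide lim_psi lim_phi) auto
    moreover have "\<forall>\<^sub>F a in at_right u. ((psi k a - psi k u) / (a - u)) / ((phi I psi k a - phi I psi k u) / (a - u)) = Q k a"
      using eventually_at_right_less[of u] by eventually_elim (auto simp: Q_def)
    ultimately have "((\<lambda>a. ereal (Q k a)) \<longlongrightarrow> ereal (rho k / c k)) (at_right u)"
      by (simp add: tendsto_cong)
    then show ?thesis
      by (rule tendsto_upperbound) (use eventually_at_right_less[of u] E_upper in \<open>auto elim: eventually_mono\<close>)
  qed
  have E_inf: "ereal N \<le> E k" if "k \<in> ?A" "c k = 0" "rho k > 0" for k N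
  proof -
    have "LIM a at_right u. ((psi k a - psi k u) / (a - u)) / ((phi I psi k a - phi I psi k u) / (a - u)) :> at_top"
    proof (rule LIM_at_top_divide[OF lim_psi[OF that(1)] that(3)])
      show "((\<lambda>a. (phi I psi k a - phi I psi k u) / (a - u)) \<longlongrightarrow> 0) (at_right u)"
        using lim_phi[OF that(1)] that(2) by simp
      show "\<forall>\<^sub>F a in at_right u. 0 < (phi I psi k a - phi I psi k u) / (a - u)"
        using eventually_at_right_less[of u]
      proof eventually_elim
        case (elim a)
        have "phi I psi k u < phi I psi k a" using phi_strict[OF that(1) u elim] .
        with elim show ?case by (intro divide_pos_pos) auto
      qed
    qed
    then have "\<forall>\<^sub>F a in at_right u. N < ((psi k a - psi k u) / (a - u)) / ((phi I psi k a - phi I psi k u) / (a - u))"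
      by (simp add: filterlim_at_top_dense)
    then have "\<forall>\<^sub>F a in at_right u. N < Q k a \<and> u < a"
      using eventually_at_right_less[of u] by eventually_elim (auto simp: Q_def)
    moreover have "at_right u \<noteq> bot" by simp
    ultimately obtain a where a: "N < Q k a \<and> u < a"
      using eventually_happens' by blast
    then have "ereal N \<le> ereal (Q k a)" by simp
    also have "\<dots> \<le> E k" using E_upper[of a k] a by simp
    finally show ?thesis .
  qed
  have cI_le: "c I \<le> c k" if "k \<in> ?A" for k
  proof -
    have "0 \<le> (\<Sum>j\<in>?A. (kappa I j - kappa k j) * rho j)"
      using that by (intro sum_nonneg mult_nonneg_nonneg) (auto intro: rho_nn simp: kappa_mono)
    then show ?thesis unfolding c_def by (simp add: sum_subtractf left_diff_distrib)
  qed
  have c_pos: "c k > 0" if "k \<in> ?A" for k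
  proof (rule ccontr)
    assume "\<not> c k > 0"
    with c_nn[OF that] have ck: "c k = 0" by simp
    have I1: "I \<in> ?A" using that by auto
    have cI: "c I = 0" using cI_le[OF that] c_nn[OF I1] ck by simp
    show False
    proof (cases "\<exists>l\<in>?A. rho l > 0")
      case False
      then have "\<forall>l\<in>?A. rho l = 0" using rho_nn by force
      then have "c k = 1" unfolding c_def by simp
      with ck show False by simp
    next
      case True
      define j where "j = Max {l\<in>?A. rho l > 0}"
      have fin: "finite {l\<in>?A. rho l > 0}" by simp
      have ne: "{l\<in>?A. rho l > 0} \<noteq> {}" using True by auto
      have jA: "j \<in> ?A" and rj: "rho j > 0" using Max_in[OF fin ne] unfolding j_def by auto
      have big: "rho l = 0" if "l \<in> ?A" "l > j" for l
      proof -
        have "\<not> rho l > 0"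
        proof
          assume "rho l > 0"
          then have "l \<in> {l\<in>?A. rho l > 0}" using that(1) by simp
          then have "l \<le> j" unfolding j_def using fin by (rule Max_ge[rotated])
          with that(2) show False by simp
        qed
        with rho_nn[OF that(1)] show ?thesis by simp
      qed
      have "c j = c I"
        unfolding c_def
      proof (intro arg_cong[where f="\<lambda>x. 1 - x"] sum.cong refl)
        fix l assume l: "l \<in> ?A"
        show "kappa j l * rho l = kappa I l * rho l"
        proof (cases "l > j")
          case True then show ?thesis using big[OF l] by simp
        next
          case False then show ?thesis using l jA unfolding kappa_def by (simp add: min_def)
        qed
      qed
      with cI have cj: "c j = 0" by simp
      define q where "q k = Q k (u + 1)" for k
      define S where "S = (\<Sum>k\<in>?A. real k * q k)"
      define N where "N = q j + \<bar>S\<bar> + 1"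
      define t where "t k = q k + (if k = j then N - q j else 0)" for k
      have "(\<Sum>k\<in>?A. ereal (real k) * ereal (t k)) \<le> (\<Sum>k\<in>?A. ereal (real k) * E k)"
      proof (rule sum_mono, rule ereal_mult_left_mono)
        fix k assume k: "k \<in> ?A"
        show "ereal (t k) \<le> E k"
        proof (cases "k = j")
          case True then show ?thesis using E_inf[OF jA cj rj, of N] by (simp add: t_def)
        next
          case False then show ?thesis using E_upper[of "u+1" k] by (simp add: t_def q_def)
        qed
      qed simp
      also have "\<dots> < ereal (1/2)" by (rule hsum')
      finally have lt: "(\<Sum>k\<in>?A. real k * t k) < 1/2" by simp
      have "(\<Sum>k\<in>?A. real k * t k) = S + real j * (N - q j)"
        unfolding t_def S_def using jA by (simp add: distrib_left sum.distrib if_distrib[of "\<lambda>x. real _ * x"] cong: if_cong)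
      also have "\<dots> \<ge> 1"
      proof -
        have "real j \<ge> 1" using jA by auto
        then have "real j * (\<bar>S\<bar> + 1) \<ge> 1 * (\<bar>S\<bar> + 1)" by (intro mult_right_mono) auto
        moreover have "q j + \<bar>S\<bar> + 1 - q j = \<bar>S\<bar> + 1" by simp
        ultimately show ?thesis unfolding N_def by (smt (verit))
      qed
      finally show False using lt by simp
    qed
  qed
  define r where "r k = rho k / c k" for k
  have r_nn: "0 \<le> r k" if "k \<in> ?A" for k using rho_nn[OF that] c_pos[OF that] by (simp add: r_def)
  have rsum: "(\<Sum>k\<in>?A. real k * r k) < 1/2"
  proof -
    have "(\<Sum>k\<in>?A. ereal (real k) * ereal (r k)) \<le> (\<Sum>k\<in>?A. ereal (real k) * E k)"
      by (rule sum_mono, rule ereal_mult_left_mono) (use E_pos c_pos in \<open>auto simp: r_def\<close>)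
    also have "\<dots> < ereal (1/2)" by (rule hsum')
    finally show ?thesis by simp
  qed
  show "\<forall>j\<in>?A. v j = 0" if hv: "\<forall>i\<in>?A. (\<Sum>j\<in>?A. Mmat I rho i j * v j) = 0" for v
  proof -
    define w where "w j = rho j * v j" for j
    have row: "c i * v i = - (\<Sum>j\<in>?A. kappa i j * w j)" if "i \<in> ?A" for i
      using hv that Mmat_row[OF that, of rho v] unfolding c_def w_def by (simp add: mult.assoc)
    have wi: "w i = - r i * (\<Sum>j\<in>?A. kappa i j * w j)" if "i \<in> ?A" for i
    proof -
      have "w i = r i * (c i * v i)" using c_pos[OF that] by (simp add: w_def r_def)
      then show ?thesis using row[OF that] by simp
    qed
    define W where "W = (\<Sum>j\<in>?A. \<bar>w j\<bar>)"
    have W0: "0 \<le> W" unfolding W_def by (simp add: sum_nonneg)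
    have wb: "\<bar>w i\<bar> \<le> r i * (2 * real i) * W" if "i \<in> ?A" for i
    proof -
      have "\<bar>w i\<bar> = r i * \<bar>\<Sum>j\<in>?A. kappa i j * w j\<bar>" using wi[OF that] r_nn[OF that] by (simp add: abs_mult)
      also have "\<bar>\<Sum>j\<in>?A. kappa i j * w j\<bar> \<le> (\<Sum>j\<in>?A. \<bar>kappa i j * w j\<bar>)" by (rule sum_abs)
      also have "\<dots> \<le> (\<Sum>j\<in>?A. 2 * real i * \<bar>w j\<bar>)"
        by (rule sum_mono) (auto simp: abs_mult kappa_def intro!: mult_right_mono)
      also have "\<dots> = 2 * real i * W" unfolding W_def by (simp add: sum_distrib_left)
      finally show ?thesis using r_nn[OF that] by (simp add: mult_left_mono mult.assoc)
    qed
    have "W \<le> (\<Sum>i\<in>?A. r i * (2 * real i) * W)" unfolding W_def[symmetric]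
      by (unfold W_def, rule sum_mono, fold W_def, rule wb)
    also have "\<dots> = 2 * (\<Sum>i\<in>?A. real i * r i) * W"
      by (simp add: sum_distrib_right sum_distrib_left mult_ac)
    finally have "W \<le> 2 * (\<Sum>i\<in>?A. real i * r i) * W" .
    then have "W * (1 - 2 * (\<Sum>i\<in>?A. real i * r i)) \<le> 0" by (simp add: algebra_simps)
    moreover have "1 - 2 * (\<Sum>i\<in>?A. real i * r i) > 0" using rsum by simp
    ultimately have "W \<le> 0" by (simp add: mult_le_0_iff)
    with W0 have "W = 0" by simp
    then have w0: "\<forall>j\<in>?A. w j = 0" unfolding W_def by (simp add: sum_nonneg_eq_0_iff)
    show ?thesis
    proof
      fix i assume i: "i \<in> ?A"
      have "c i * v i = 0" using row[OF i] w0 by simp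
      with c_pos[OF i] show "v i = 0" by simp
    qed
  qed
qed


theorem lemma6p7:
  fixes I :: nat and psi :: "nat \<Rightarrow> real \<Rightarrow> real" and i :: nat and u :: real
  assumes "psi \<in> classD1 I" and "i \<in> {1..I}" and "u \<ge> 0"
  shows "real i * dpsi psi i u =
    (\<Sum>j\<in>{1..I}. Mstar I (\<lambda>k. dpsi psi k u) i j * veff I (\<lambda>k. dpsi psi k u) j * dpsi psi j u)"
proof -
  define rho where "rho = (\<lambda>k. dpsi psi k u)"
  have inj: "\<And>v. (\<forall>i\<in>{1..I}. (\<Sum>j\<in>{1..I}. Mmat I rho i j * v j) = 0) \<Longrightarrow> (\<forall>j\<in>{1..I}. v j = 0)"
    unfolding rho_def by (rule main_part[OF assms(1) assms(3)])
  define Pr where "Pr = (\<lambda>v. (\<forall>i\<in>{1..I}. (\<Sum>j\<in>{1..I}. Mmat I rho i j * v j) = real i)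
                       \<and> (\<forall>j. j \<notin> {1..I} \<longrightarrow> v j = 0))"
  obtain v0 where v0: "\<forall>i\<in>{1..I}. (\<Sum>j\<in>{1..I}. Mmat I rho i j * v0 j) = real i"
    using inj_imp_solvable[of I "Mmat I rho", OF inj] by blast
  define v1 where "v1 j = (if j \<in> {1..I} then v0 j else 0)" for j
  have "Pr v1"
  proof -
    have "(\<Sum>j\<in>{1..I}. Mmat I rho i j * v1 j) = (\<Sum>j\<in>{1..I}. Mmat I rho i j * v0 j)" for i
      by (rule sum.cong) (auto simp: v1_def)
    then show ?thesis using v0 unfolding Pr_def by (auto simp: v1_def)
  qed
  moreover have uniq: "a = b" if "Pr a" "Pr b" for a b
  proof -
    have "\<forall>i\<in>{1..I}. (\<Sum>j\<in>{1..I}. Mmat I rho i j * (a j - b j)) = 0"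
      using that unfolding Pr_def by (simp add: right_diff_distrib sum_subtractf)
    then have "\<forall>j\<in>{1..I}. a j - b j = 0" by (rule inj)
    then show ?thesis using that unfolding Pr_def by (intro ext) (metis eq_iff_diff_eq_0)
  qed
  ultimately have ex1: "\<exists>!v. Pr v" by blast
  have ve: "veff I rho = (THE v. Pr v)" unfolding veff_def Pr_def ..
  have vP: "Pr (veff I rho)" unfolding ve by (rule theI'[OF ex1])
  have "(\<Sum>j\<in>{1..I}. Mstar I rho i j * veff I rho j * rho j)
      = (\<Sum>j\<in>{1..I}. rho i * (Mmat I rho i j * veff I rho j))"
    by (rule sum.cong[OF refl]) (metis Mstar_Mmat mult.assoc mult.commute)
  also have "\<dots> = rho i * real i" using vP assms(2) unfolding Pr_def by (simp add: sum_distrib_left[symmetric])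
  finally have "real i * rho i = (\<Sum>j\<in>{1..I}. Mstar I rho i j * veff I rho j * rho j)" by simp
  then show ?thesis unfolding rho_def .
qed

end
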